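(* Let $S$ be a numerical semigroup with Frobenius number $F$ and $\mathrm{l}(S)\ge 2$. Then $\mathrm{h}(S)$ is defined, $S\cup\{\mathrm{h}(S)\}$ is a numerical semigroup with Frobenius number $F$, and $\mathrm{l}(S\cup\{\mathrm{h}(S)\})=\mathrm{l}(S)-2$.
   Context: A numerical semigroup is a subset $S\subseteq\mathbb{N}$ closed under addition with $0\in S$ and $\mathbb{N}\setminus S$ finite; $\mathrm{F}(S)=\max(\mathbb{Z}\setminus S)$. $\mathrm{N}(S)=\{s\in S\mid s<\mathrm{F}(S)\}$, $\mathrm{L}(S)=\{x\in\mathbb{N}\setminus S\mid \mathrm{F}(S)-x\notin \mathrm{N}(S)\}$, $\mathrm{l}(S)=\#\mathrm{L}(S)$. For a numerical semigroup $S$ with $\mathrm{l}(S)\ge2$, $\mathrm{h}(S)=\max\{x\in\mathbb{N}\setminus S\mid \mathrm{F}(S)-x\in\mathbb{N}\setminus S,\ x\ne \mathrm{F}(S)/2\}$ (which equals $\max\mathrm{L}(S)$). *)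

theory Defs
  imports Main
begin

definition numerical_semigroup :: "nat set \<Rightarrow> bool" where
  "numerical_semigroup S \<longleftrightarrow> 0 \<in> S \<and> (\<forall>a\<in>S. \<forall>b\<in>S. a + b \<in> S) \<and> finite (UNIV - S)"

text \<open>Frobenius number: max of the integers not in S (negative integers are never in S);
  equals -1 when S is all of the naturals.\<close>
definition frob :: "nat set \<Rightarrow> int" where
  "frob S = (if UNIV - S = {} then -1 else int (Max (UNIV - S)))"

definition NS :: "nat set \<Rightarrow> nat set" where
  "NS S = {s \<in> S. int s < frob S}"

definition LS :: "nat set \<Rightarrow> nat set" where
  "LS S = {x. x \<notin> S \<and> \<not> (\<exists>n\<in>NS S. int n = frob S - int x)}"

definition lS :: "nat set \<Rightarrow> nat" where
  "lS S = card (LS S)"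

definition HS :: "nat set \<Rightarrow> nat set" where
  "HS S = {x. x \<notin> S \<and> (\<exists>y. y \<notin> S \<and> int y = frob S - int x) \<and> 2 * int x \<noteq> frob S}"

definition hS :: "nat set \<Rightarrow> nat" where
  "hS S = Max (HS S)"

end

theory Submission
  imports Defs
begin

lemma gap_le:
  assumes "numerical_semigroup S" "x \<notin> S"
  shows "x \<le> Max (UNIV - S)"
  using assms unfolding numerical_semigroup_def by (simp add: Max_ge)

lemma frob_eq:
  assumes "UNIV - S \<noteq> {}"
  shows "frob S = int (Max (UNIV - S))"
  using assms unfolding frob_def by simp

lemma max_gap:
  assumes "numerical_semigroup S" "UNIV - S \<noteq> {}"
  shows "Max (UNIV - S) \<notin> S"
proof -
  have "finite (UNIV - S)" using assms(1) unfolding numerical_semigroup_def by simp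
  then have "Max (UNIV - S) \<in> UNIV - S" using assms(2) Max_in by blast
  then show ?thesis by simp
qed

lemma LS_char:
  assumes "numerical_semigroup S" "UNIV - S \<noteq> {}"
  shows "LS S = {x. x \<notin> S \<and> x \<le> Max (UNIV - S) \<and> Max (UNIV - S) - x \<notin> S}"
proof -
  let ?f = "Max (UNIV - S)"
  have z: "0 \<in> S" using assms(1) unfolding numerical_semigroup_def by simp
  have fr: "frob S = int ?f" using frob_eq[OF assms(2)] .
  show ?thesis
  proof (intro set_eqI iffI)
    fix x assume "x \<in> LS S"
    then have xn: "x \<notin> S" and nn: "\<not> (\<exists>n\<in>NS S. int n = frob S - int x)"
      unfolding LS_def by auto
    have xl: "x \<le> ?f" using gap_le[OF assms(1) xn] .
    have x0: "0 < x" using xn z by (cases x) auto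
    have "?f - x \<notin> S"
    proof
      assume "?f - x \<in> S"
      then have "?f - x \<in> NS S" unfolding NS_def fr using x0 xl by auto
      then show False using nn fr xl by auto
    qed
    then show "x \<in> {x. x \<notin> S \<and> x \<le> ?f \<and> ?f - x \<notin> S}" using xn xl by simp
  next
    fix x assume "x \<in> {x. x \<notin> S \<and> x \<le> ?f \<and> ?f - x \<notin> S}"
    then have xn: "x \<notin> S" and xl: "x \<le> ?f" and c: "?f - x \<notin> S" by auto
    have "\<not> (\<exists>n\<in>NS S. int n = frob S - int x)"
    proof
      assume "\<exists>n\<in>NS S. int n = frob S - int x"
      then obtain n where "n \<in> S" "int n = int ?f - int x" unfolding NS_def fr by auto
      then have "n = ?f - x" using xl by linarith
      then show False using c \<open>n \<in> S\<close> by simp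
    qed
    then show "x \<in> LS S" using xn unfolding LS_def by simp
  qed
qed

lemma HS_char:
  assumes "numerical_semigroup S" "UNIV - S \<noteq> {}"
  shows "HS S = {x. x \<in> LS S \<and> 2 * x \<noteq> Max (UNIV - S)}"
proof -
  let ?f = "Max (UNIV - S)"
  have fr: "frob S = int ?f" using frob_eq[OF assms(2)] .
  show ?thesis
  proof (intro set_eqI iffI)
    fix x assume "x \<in> HS S"
    then obtain y where a: "x \<notin> S" "y \<notin> S" "int y = int ?f - int x" "2 * int x \<noteq> int ?f"
      unfolding HS_def fr by auto
    have b: "x \<le> ?f" using gap_le[OF assms(1) \<open>x \<notin> S\<close>] .
    have "y = ?f - x" using a(3) b by linarith
    then have "x \<notin> S" "x \<le> ?f" "?f - x \<notin> S" "2 * x \<noteq> ?f"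
      using a b by auto
    then show "x \<in> {x. x \<in> LS S \<and> 2 * x \<noteq> ?f}"
      unfolding LS_char[OF assms] by blast
  next
    fix x assume "x \<in> {x. x \<in> LS S \<and> 2 * x \<noteq> ?f}"
    then have "x \<notin> S" "x \<le> ?f" "?f - x \<notin> S" "2 * x \<noteq> ?f"
      unfolding LS_char[OF assms] by auto
    then show "x \<in> HS S" unfolding HS_def fr
      by (auto intro!: exI[of _ "?f - x"])
  qed
qed

theorem lemma9:
  fixes S :: "nat set"
  assumes "numerical_semigroup S" and "lS S \<ge> 2"
  shows "HS S \<noteq> {} \<and> numerical_semigroup (insert (hS S) S)
         \<and> frob (insert (hS S) S) = frob S
         \<and> lS (insert (hS S) S) = lS S - 2"
proof -
  have ns: "numerical_semigroup S" by fact
  have z: "0 \<in> S" and add: "\<And>a b. a \<in> S \<Longrightarrow> b \<in> S \<Longrightarrow> a + b \<in> S"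
    and fin: "finite (UNIV - S)" using ns unfolding numerical_semigroup_def by auto
  have "LS S \<noteq> {}" using assms(2) unfolding lS_def by auto
  then obtain x0 where "x0 \<in> LS S" by auto
  then have ne: "UNIV - S \<noteq> {}" unfolding LS_def by auto
  define f where "f = Max (UNIV - S)"
  have fr: "frob S = int f" using frob_eq[OF ne] f_def by simp
  have fS: "f \<notin> S" using max_gap[OF ns ne] f_def by simp
  have big: "\<And>x. x > f \<Longrightarrow> x \<in> S" using gap_le[OF ns] f_def by force
  have L: "LS S = {x. x \<notin> S \<and> x \<le> f \<and> f - x \<notin> S}" using LS_char[OF ns ne] f_def by simp
  have H: "HS S = {x. x \<in> LS S \<and> 2 * x \<noteq> f}" using HS_char[OF ns ne] f_def by simp
  have finL: "finite (LS S)" using fin unfolding L by (rule finite_subset[rotated]) auto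
  have c2: "card (LS S) \<ge> 2" using assms(2) unfolding lS_def .
  have HSne: "HS S \<noteq> {}"
  proof
    assume e: "HS S = {}"
    then have "LS S \<subseteq> {f div 2}" unfolding H by auto
    then have "card (LS S) \<le> card {f div 2}" by (intro card_mono) auto
    then have "card (LS S) \<le> 1" by simp
    then show False using c2 by simp
  qed
  have finH: "finite (HS S)" using finL unfolding H by auto
  define h where "h = hS S"
  have hH: "h \<in> HS S" unfolding h_def hS_def using Max_in[OF finH HSne] .
  have hmax: "\<And>y. y \<in> HS S \<Longrightarrow> y \<le> h" unfolding h_def hS_def using Max_ge[OF finH] by blast
  have hS: "h \<notin> S" and hf: "h \<le> f" and fhS: "f - h \<notin> S" and h2: "2 * h \<noteq> f"
    using hH unfolding H L by auto
  have "f - h \<in> HS S" using hH hf h2 fhS hS unfolding H L by auto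
  then have "f - h \<le> h" using hmax by blast
  then have hgt: "f < 2 * h" using h2 by linarith
  have hnf: "h \<noteq> f" using fhS z by auto
  define T where "T = insert h S"
  have hs: "h + s \<in> T" if "s \<in> S" for s
  proof (cases "s = 0")
    case True then show ?thesis unfolding T_def by simp
  next
    case False
    show ?thesis
    proof (rule ccontr)
      assume "h + s \<notin> T"
      then have a: "h + s \<notin> S" unfolding T_def by simp
      then have b: "h + s \<le> f" using big[of "h + s"] by (meson not_le)
      have c: "f - (h + s) \<notin> S"
      proof
        assume "f - (h + s) \<in> S"
        then have "f - (h + s) + s \<in> S" using add that by blast
        moreover have "f - (h + s) + s = f - h" using b by simp
        ultimately show False using fhS by simp
      qed
      have "h + s \<in> HS S" unfolding H L using a b c hgt by auto
      then have "h + s \<le> h" using hmax by blast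
      then show False using False by simp
    qed
  qed
  have nsT: "numerical_semigroup T"
    unfolding numerical_semigroup_def
  proof (intro conjI ballI)
    show "0 \<in> T" using z unfolding T_def by simp
    show "finite (UNIV - T)" using fin unfolding T_def by (rule finite_subset[rotated]) auto
  next
    fix a b assume a: "a \<in> T" and b: "b \<in> T"
    show "a + b \<in> T"
    proof (cases "a = h")
      case True
      show ?thesis
      proof (cases "b = h")
        case True
        then have "a + b \<in> S" using \<open>a = h\<close> big hgt by simp
        then show ?thesis unfolding T_def by simp
      next
        case False
        then have "b \<in> S" using b unfolding T_def by simp
        then show ?thesis using hs \<open>a = h\<close> by simp
      qed
    next
      case False
      then have aS: "a \<in> S" using a unfolding T_def by simp
      show ?thesis
      proof (cases "b = h")
        case True
        then show ?thesis using hs[OF aS] by (simp add: add.commute)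
      next
        case False
        then have "b \<in> S" using b unfolding T_def by simp
        then show ?thesis using add aS unfolding T_def by simp
      qed
    qed
  qed
  have gT: "UNIV - T = (UNIV - S) - {h}" unfolding T_def by auto
  have neT: "UNIV - T \<noteq> {}" using fS hnf unfolding T_def by auto
  have MT: "Max (UNIV - T) = f"
  proof (rule antisym)
    show "Max (UNIV - T) \<le> f" unfolding gT f_def
      using fin neT gT by (intro Max_mono) auto
    show "f \<le> Max (UNIV - T)"
      using fin fS hnf unfolding gT by (intro Max_ge) auto
  qed
  have frT: "frob T = frob S" using frob_eq[OF neT] MT fr by simp
  have LT: "LS T = LS S - {h, f - h}"
    unfolding LS_char[OF nsT neT] MT L unfolding T_def using hf by auto
  have "f - h \<noteq> h" using h2 by linarith
  moreover have "f - h \<in> LS S" "h \<in> LS S" using hH \<open>f - h \<in> HS S\<close> unfolding H by auto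
  ultimately have sub: "{h, f - h} \<subseteq> LS S" and c2': "card {h, f - h} = 2" by auto
  have "card (LS T) = card (LS S) - card {h, f - h}" unfolding LT
    using card_Diff_subset[OF _ sub] by simp
  then have "lS T = lS S - 2" unfolding lS_def using c2' by simp
  then have g: "HS S \<noteq> {} \<and> numerical_semigroup T \<and> frob T = frob S \<and> lS T = lS S - 2"
    using HSne nsT frT by blast
  show ?thesis using g unfolding T_def h_def .
qed

end
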